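(* Assume $\theta_i<1$ for all $i$ and $\theta_j>0$ for some $j$. Suppose $\mathcal G(C)$ is a star topology with center node $l$ and $\theta_l=0$. Then for every $x(0)\in\Delta_n$ the trajectory of system (A) converges exponentially to the unique equilibrium $x^*$, given by $x^*_i=1/n$ for $i\in\mathcal V_f\setminus\{l\}$, $x^*_i=\dfrac{n-\sqrt{n^2-4n\theta_i(1-\theta_i)}}{2n\theta_i}$ for $i\in\mathcal V_p$, and $x^*_l=\dfrac1n+\dfrac1n\sum_{j\in\mathcal V_p}\dfrac{\theta_j(1-x^*_j)}{1-\theta_jx^*_j}$.
   Context: Let $n\ge 2$, $\mathbf 1_n$ the all-ones vector, $I_n$ the identity matrix, $\Delta_n=\{x\in\mathbb R^n: x\ge 0,\ \mathbf 1_n^Tx=1\}$. Let $C\in\mathbb R^{n\times n}$ be a nonnegative row-stochastic matrix with zero diagonal, and $\mathcal G(C)$ the digraph on $\{1,\dots,n\}$ with an edge $(i,j)$ iff $C_{ij}>0$. $\mathcal G(C)$ is a star topology with center node $l$ if every edge of $\mathcal G(C)$ is either from $l$ or to $l$ (i.e. $C_{ij}>0$ implies $i=l$ or $j=l$). Let $\theta=(\theta_1,\dots,\theta_n)\in[0,1]^n$, $\Theta=\mathrm{diag}(\theta)$, $W(x)=\mathrm{diag}(x)+(I_n-\mathrm{diag}(x))C$. Let $\mathcal V_f=\{i:\theta_i=0\}$ and $\mathcal V_p=\{i:\theta_i>0\}$. System (A): $x(s+1)=F(x(s))$, $s=0,1,2,\dots$, $x(0)\in\Delta_n$, where $F(x)=(I_n-\Theta)(I_n-W(x)^T\Theta)^{-1}\mathbf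 1_n/n$. *)

theory Defs
  imports "HOL-Analysis.Analysis"
begin

definition prob_simplex :: "(real^'n) set" where
  "prob_simplex = {x. (\<forall>i. 0 \<le> x $ i) \<and> (\<Sum>i\<in>UNIV. x $ i) = 1}"

definition diag_mat :: "real^'n \<Rightarrow> real^'n^'n" where
  "diag_mat x = (\<chi> i j. if i = j then x $ i else 0)"

definition row_stochastic_zero_diag :: "real^'n^'n \<Rightarrow> bool" where
  "row_stochastic_zero_diag C \<longleftrightarrow>
     (\<forall>i j. 0 \<le> C $ i $ j) \<and> (\<forall>i. (\<Sum>j\<in>UNIV. C $ i $ j) = 1) \<and> (\<forall>i. C $ i $ i = 0)"

definition star_topology :: "real^'n^'n \<Rightarrow> 'n \<Rightarrow> bool" where
  "star_topology C l \<longleftrightarrow> (\<forall>i j. C $ i $ j > 0 \<longrightarrow> i = l \<or> j = l)"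

definition Wmat :: "real^'n^'n \<Rightarrow> real^'n \<Rightarrow> real^'n^'n" where
  "Wmat C x = diag_mat x + (mat 1 - diag_mat x) ** C"

definition Fmap :: "real^'n^'n \<Rightarrow> real^'n \<Rightarrow> real^'n \<Rightarrow> real^'n" where
  "Fmap C \<theta> x = (mat 1 - diag_mat \<theta>) *v
      (matrix_inv (mat 1 - transpose (Wmat C x) ** diag_mat \<theta>) *v
        (\<chi> i. 1 / real CARD('n)))"

definition trajectory :: "real^'n^'n \<Rightarrow> real^'n \<Rightarrow> real^'n \<Rightarrow> nat \<Rightarrow> real^'n" where
  "trajectory C \<theta> x0 s = (Fmap C \<theta> ^^ s) x0"

text \<open>The claimed equilibrium x* (V_f = {i. theta_i = 0}, V_p = {i. theta_i > 0}).\<close>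
definition xstar_p :: "real^'n \<Rightarrow> 'n \<Rightarrow> real" where
  "xstar_p \<theta> i = (let n = real CARD('n) in
      (n - sqrt (n^2 - 4 * n * \<theta> $ i * (1 - \<theta> $ i))) / (2 * n * \<theta> $ i))"

definition xstar :: "real^'n \<Rightarrow> 'n \<Rightarrow> real^'n" where
  "xstar \<theta> l = (\<chi> i. let n = real CARD('n) in
      if 0 < \<theta> $ i then xstar_p \<theta> i
      else if i = l then 1/n + (1/n) * (\<Sum>j\<in>{j. 0 < \<theta> $ j}.
              \<theta> $ j * (1 - xstar_p \<theta> j) / (1 - \<theta> $ j * xstar_p \<theta> j))
      else 1/n)"

end

theory Submission imports Defs begin

lemma quad:
  fixes N t a :: real
  assumes N: "N \<ge> 2" and t: "0 < t" "t < 1"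
    and a: "a = (N - sqrt (N^2 - 4*N*t*(1-t))) / (2*N*t)"
  shows "0 \<le> a \<and> a \<le> 1 \<and> N*t*a^2 - N*a + (1-t) = 0"
proof -
  define D where "D = N^2 - 4*N*t*(1-t)"
  have tt: "t*(1-t) \<le> 1/4" using zero_le_power2[of "t - 1/2"] by (simp add: power2_eq_square algebra_simps)
  have D0: "D \<ge> 0"
  proof -
    have "4*N*t*(1-t) = 4*N*(t*(1-t))" by simp
    also have "\<dots> \<le> 4*N*(1/4)" using tt N by (intro mult_left_mono) auto
    also have "\<dots> \<le> N^2" using N by (simp add: power2_eq_square) 
    finally show ?thesis unfolding D_def by simp
  qed
  have DN: "D \<le> N^2" unfolding D_def using N t by (simp add: mult_nonneg_nonneg)
  have sD: "sqrt D \<le> N" using DN N by (metis abs_of_nonneg dual_order.trans le_numeral_extra(1) linorder_not_le nle_le one_le_numeral real_sqrt_abs real_sqrt_le_mono zero_le_numeral)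
  have sq: "sqrt D ^ 2 = D" using D0 by simp
  have pos: "2*N*t > 0" using N t by simp
  have ae: "2*N*t*a = N - sqrt D"
  proof -
    have "2*N*t*a = (2*N*t)*((N - sqrt D)/(2*N*t))" by (simp add: a D_def)
    also have "\<dots> = N - sqrt D" using pos by (metis less_irrefl nonzero_mult_div_cancel_left times_divide_eq_right)
    finally show ?thesis .
  qed
  have a0: "0 \<le> a" using ae pos sD by (metis diff_ge_0_iff_ge zero_le_mult_iff linorder_not_less)
  have low: "N - 2*N*t \<le> sqrt D"
  proof (cases "N - 2*N*t \<le> 0")
    case True thus ?thesis using D0 by (meson order_trans real_sqrt_ge_zero)
  next
    case False
    have "(N - 2*N*t)^2 \<le> D" unfolding D_def
    proof -
      have "N^2 - 4*N*t*(1-t) - (N - 2*N*t)^2 = 4*N*t*(1-t)*(N-1)" by (simp add: power2_eq_square algebra_simps)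
      also have "\<dots> \<ge> 0" using N t by simp
      finally show "(N - 2*N*t)^2 \<le> N^2 - 4*N*t*(1-t)" by simp
    qed
    thus ?thesis using False by (meson linorder_not_le real_le_rsqrt)
  qed
  have a1: "a \<le> 1"
  proof -
    have h: "(2*N*t)*a \<le> (2*N*t)*1" using ae low by simp
    show ?thesis by (metis mult_le_cancel_left_pos pos h)
  qed
  have "(2*N*t*a - N)^2 = D" using ae sq by (simp add: power2_commute)
  hence "4*N*t*(N*t*a^2 - N*a + (1-t)) = 0" unfolding D_def by (simp add: power2_eq_square algebra_simps)
  hence "N*t*a^2 - N*a + (1-t) = 0" using N t by simp
  thus ?thesis using a0 a1 by simp
qed

lemma contr:
  fixes N t a x :: real
  assumes N: "N \<ge> 2" and t: "0 < t" "t < 1"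
    and a: "0 \<le> a" "a \<le> 1" "N*t*a^2 - N*a + (1-t) = 0"
  shows "(1-t)/(N*(1-t*a)) = a" and "0 < t*a/(1-t)" and "t*a/(1-t) < 1"
    and "0 \<le> x \<Longrightarrow> x \<le> 1 \<Longrightarrow> \<bar>(1-t)/(N*(1-t*a)) - a\<bar> \<le> 0"
    and "0 \<le> x \<Longrightarrow> x \<le> 1 \<Longrightarrow> \<bar>(1-t)/(N*(1-t*x)) - a\<bar> \<le> t*a/(1-t) * \<bar>x - a\<bar>"
proof -
  have ta: "t*a \<le> t" using a t by (simp add: mult_left_le)
  hence p: "1 - t*a > 0" using t by linarith
  have e: "N*a*(1-t*a) = 1-t" using a(3) by (simp add: power2_eq_square algebra_simps)
  show g: "(1-t)/(N*(1-t*a)) = a" using e p N by (simp add: field_simps)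
  have apos: "a > 0" using e t a(1) by (cases "a = 0") auto
  show "0 < t*a/(1-t)" using apos t by simp
  have "N*a*(1-t*a) \<le> 1 * (1 - t*a)" using e ta by simp
  hence aN: "N*a \<le> 1" using p by (simp add: mult_le_cancel_right_pos)
  have "t*a < 1-t"
  proof -
    have "t + N*t*a \<le> 2*t" using aN t by (simp add: mult.assoc[symmetric] mult.commute[of N] mult_left_le)
    hence "t + N*t*a < N" using t N by linarith
    hence "t < N*(1-t*a)" by (simp add: algebra_simps)
    hence "t*a < a * (N*(1-t*a))" using apos by (simp add: mult.commute)
    thus ?thesis using e by (simp add: algebra_simps)
  qed
  thus "t*a/(1-t) < 1" using t by simp
  show "0 \<le> x \<Longrightarrow> x \<le> 1 \<Longrightarrow> \<bar>(1-t)/(N*(1-t*a)) - a\<bar> \<le> 0" using g by simp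
  assume x: "0 \<le> x" "x \<le> 1"
  have tx: "t*x \<le> t" using x t by (simp add: mult_left_le)
  hence px: "1 - t*x \<ge> 1 - t" by linarith
  have px0: "1 - t*x > 0" using px t by linarith
  have "(1-t)/(N*(1-t*x)) - a = (1-t)/(N*(1-t*x)) - (1-t)/(N*(1-t*a))" using g by simp
  also have "\<dots> = (1-t)*t*(x-a)/(N*(1-t*x)*(1-t*a))"
  proof -
    have n1: "1-t*x \<noteq> 0" "1-t*a \<noteq> 0" "N \<noteq> 0" using px0 p N by auto
    have "(1-t)/(N*(1-t*x)) - (1-t)/(N*(1-t*a)) = ((1-t)*(N*(1-t*a)) - (1-t)*(N*(1-t*x)))/((N*(1-t*x))*(N*(1-t*a)))"
      using n1 by (simp add: diff_frac_eq)
    also have "(1-t)*(N*(1-t*a)) - (1-t)*(N*(1-t*x)) = N*((1-t)*t*(x-a))" by (simp add: algebra_simps)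
    also have "(N*(1-t*x))*(N*(1-t*a)) = N*(N*(1-t*x)*(1-t*a))" by (simp add: algebra_simps)
    finally show ?thesis using n1 by simp
  qed
  also have "\<dots> = t*a*(x-a)/(1-t*x)"
  proof -
    have "N*(1-t*a) = (1-t)/a" using e apos by (simp add: field_simps)
    moreover have "N*(1-t*x)*(1-t*a) = (1-t*x)*(N*(1-t*a))" by (simp add: algebra_simps)
    ultimately have "N*(1-t*x)*(1-t*a) = (1-t*x)*((1-t)/a)" by simp
    hence "(1-t)*t*(x-a)/(N*(1-t*x)*(1-t*a)) = (1-t)*t*(x-a)/((1-t*x)*((1-t)/a))" by simp
    also have "\<dots> = t*a*(x-a)/(1-t*x)"
    proof -
      have n: "1-t \<noteq> 0" "1-t*x \<noteq> 0" "a \<noteq> 0" using t apos px0 by auto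
      have "(1-t*x)*((1-t)/a) = ((1-t*x)*(1-t))/a" by simp
      hence "(1-t)*t*(x-a)/((1-t*x)*((1-t)/a)) = (1-t)*t*(x-a)*a/((1-t*x)*(1-t))"
        using n by simp
      also have "\<dots> = ((1-t)*(t*a*(x-a)))/((1-t)*(1-t*x))" by (simp add: algebra_simps)
      also have "\<dots> = t*a*(x-a)/(1-t*x)" using n by (rule_tac mult_divide_mult_cancel_left) 
      finally show ?thesis .
    qed
    finally show ?thesis .
  qed
  finally have "\<bar>(1-t)/(N*(1-t*x)) - a\<bar> = t*a*\<bar>x-a\<bar>/(1-t*x)" using px0 t apos by (simp add: abs_mult abs_divide)
  also have "\<dots> \<le> t*a*\<bar>x-a\<bar>/(1-t)" using t apos px px0 by (intro divide_left_mono mult_pos_pos) auto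
  finally show "\<bar>(1-t)/(N*(1-t*x)) - a\<bar> \<le> t*a/(1-t) * \<bar>x - a\<bar>" by simp
qed



lemma inv_solve:
  fixes A :: "real^'n^'n"
  assumes "\<forall>v. A *v v = 0 \<longrightarrow> v = 0" "A *v y = b"
  shows "matrix_inv A *v b = y"
proof -
  have "\<exists>B. B ** A = mat 1" using assms(1) matrix_left_invertible_ker by blast
  hence inv: "invertible A" using invertible_left_inverse by blast
  hence "A ** matrix_inv A = mat 1 \<and> matrix_inv A ** A = mat 1"
    unfolding matrix_inv_def invertible_def by (rule someI_ex)
  hence "matrix_inv A ** A = mat 1" by blast
  hence "matrix_inv A *v (A *v y) = y" by (metis matrix_vector_mul_assoc matrix_vector_mul_lid)
  thus ?thesis using assms(2) by simp
qed

lemma W_entry: "Wmat C x $ j $ i = (if j = i then x$j else 0) + (1 - x$j) * C$j$i"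
proof -
  have "((mat 1 - diag_mat x) ** C) $ j $ i = (\<Sum>k\<in>UNIV. (if j = k then 1 - x$j else 0) * C$k$i)"
    by (simp add: matrix_matrix_mult_def diag_mat_def mat_def if_distrib cong: if_cong)
  also have "\<dots> = (\<Sum>k\<in>UNIV. if j = k then (1 - x$j) * C$k$i else 0)"
    by (rule sum.cong) auto
  also have "\<dots> = (1 - x$j) * C$j$i" by (simp add: sum.delta)
  finally show ?thesis by (simp add: Wmat_def diag_mat_def)
qed

lemma M_apply:
  "((mat 1 - transpose (Wmat C x) ** diag_mat \<theta>) *v v) $ i
     = v$i - x$i * \<theta>$i * v$i - (\<Sum>j\<in>UNIV. (1 - x$j) * C$j$i * \<theta>$j * v$j)"
proof -
  have e: "(transpose (Wmat C x) ** diag_mat \<theta>) $ i $ j = Wmat C x $ j $ i * \<theta>$j" for j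
  proof -
    have "(transpose (Wmat C x) ** diag_mat \<theta>) $ i $ j = (\<Sum>k\<in>UNIV. Wmat C x $ k $ i * (if k = j then \<theta>$k else 0))"
      by (simp add: matrix_matrix_mult_def diag_mat_def transpose_def)
    also have "\<dots> = Wmat C x $ j $ i * \<theta>$j" by (simp add: if_distrib cong: if_cong)
    finally show ?thesis .
  qed
  have "((mat 1 - transpose (Wmat C x) ** diag_mat \<theta>) *v v) $ i
     = (\<Sum>j\<in>UNIV. (if i = j then 1 else 0) * v$j) - (\<Sum>j\<in>UNIV. Wmat C x $ j $ i * \<theta>$j * v$j)"
    by (simp add: matrix_vector_mult_def e mat_def left_diff_distrib sum_subtractf)
  also have "(\<Sum>j\<in>UNIV. Wmat C x $ j $ i * \<theta>$j * v$j)
      = (\<Sum>j\<in>UNIV. (if j = i then x$j * \<theta>$j * v$j else 0) + (1 - x$j) * C$j$i * \<theta>$j * v$j)"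
    by (rule sum.cong) (auto simp: W_entry algebra_simps)
  also have "\<dots> = x$i * \<theta>$i * v$i + (\<Sum>j\<in>UNIV. (1 - x$j) * C$j$i * \<theta>$j * v$j)"
    by (simp add: sum.distrib)
  also have "(\<Sum>j\<in>UNIV. (if i = j then 1 else 0) * v$j) = (\<Sum>j\<in>UNIV. if i = j then v$j else 0)"
    by (rule sum.cong) auto
  finally show ?thesis by (simp add: sum.delta)
qed

lemma C_zero:
  assumes rs: "row_stochastic_zero_diag C" and st: "star_topology C l"
    and "j \<noteq> l" "i \<noteq> l"
  shows "C$j$i = 0"
proof -
  have "0 \<le> C$j$i" using rs unfolding row_stochastic_zero_diag_def by blast
  moreover have "\<not> C$j$i > 0" using st assms(3,4) unfolding star_topology_def by blast
  ultimately show ?thesis by linarith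
qed

lemma C_col:
  assumes rs: "row_stochastic_zero_diag C" and st: "star_topology C l"
    and "j \<noteq> l"
  shows "C$j$l = 1"
proof -
  have "1 = (\<Sum>k\<in>UNIV. C$j$k)" using rs unfolding row_stochastic_zero_diag_def by simp
  also have "\<dots> = C$j$l + (\<Sum>k\<in>UNIV-{l}. C$j$k)"
    by (simp add: sum.remove)
  also have "(\<Sum>k\<in>UNIV-{l}. C$j$k) = 0"
    by (rule sum.neutral) (use C_zero[OF rs st assms(3)] in auto)
  finally show ?thesis by simp
qed

lemma diag_apply: "((mat 1 - diag_mat \<theta>) *v y) $ i = (1 - \<theta>$i) * y$i"
proof -
  have "((mat 1 - diag_mat \<theta>) *v y) $ i = (\<Sum>j\<in>UNIV. ((if i = j then 1 else 0) - (if i = j then \<theta>$i else 0)) * y$j)"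
    unfolding matrix_vector_mult_def by (simp add: mat_def diag_mat_def)
  also have "\<dots> = (\<Sum>j\<in>UNIV. if i = j then (1 - \<theta>$i) * y$j else 0)"
    by (rule sum.cong) auto
  finally show ?thesis by (simp add: sum.delta)
qed

lemma Fmap_formula:
  fixes C :: "real^'n^'n"
  assumes rs: "row_stochastic_zero_diag C" and st: "star_topology C l"
    and th: "\<forall>i. 0 \<le> \<theta> $ i \<and> \<theta> $ i < 1" and tl: "\<theta> $ l = 0"
    and x1: "\<forall>i. i \<noteq> l \<longrightarrow> x$i \<le> 1"
  shows "Fmap C \<theta> x $ i = (if i = l then 1 / real CARD('n) + (\<Sum>j\<in>UNIV. (1 - x$j) * \<theta>$j / (real CARD('n) * (1 - \<theta>$j * x$j)))
      else (1 - \<theta>$i) / (real CARD('n) * (1 - \<theta>$i * x$i)))"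
proof -
  define N where "N = real CARD('n)"
  have N: "N > 0" unfolding N_def by simp
  have pos: "1 - \<theta>$j * x$j > 0" for j
  proof (cases "j = l")
    case True thus ?thesis using tl by simp
  next
    case False
    have "\<theta>$j * x$j \<le> \<theta>$j * 1" using th x1 False by (intro mult_left_mono) auto
    moreover have "\<theta>$j < 1" using th by blast
    ultimately show ?thesis by linarith
  qed
  define M where "M = mat 1 - transpose (Wmat C x) ** diag_mat \<theta>"
  define y :: "real^'n" where "y = (\<chi> i. if i = l then 1/N + (\<Sum>j\<in>UNIV. (1 - x$j) * \<theta>$j / (N * (1 - \<theta>$j * x$j)))
      else 1 / (N * (1 - \<theta>$i * x$i)))"
  have s0: "(\<Sum>j\<in>UNIV. (1 - x$j) * C$j$i * \<theta>$j * v$j) = 0" if "i \<noteq> l" for i v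
  proof (rule sum.neutral, rule ballI)
    fix j show "(1 - x$j) * C$j$i * \<theta>$j * v$j = 0"
      by (cases "j = l") (auto simp: C_zero[OF rs st _ that] tl)
  qed
  have sl: "(\<Sum>j\<in>UNIV. (1 - x$j) * C$j$l * \<theta>$j * v$j) = (\<Sum>j\<in>UNIV. (1 - x$j) * \<theta>$j * v$j)" for v
  proof (rule sum.cong[OF refl])
    fix j show "(1 - x$j) * C$j$l * \<theta>$j * v$j = (1 - x$j) * \<theta>$j * v$j"
      by (cases "j = l") (auto simp: C_col[OF rs st] tl)
  qed
  have ker: "\<forall>v. M *v v = 0 \<longrightarrow> v = 0"
  proof (intro allI impI)
    fix v assume "M *v v = 0"
    hence e: "v$i - x$i * \<theta>$i * v$i - (\<Sum>j\<in>UNIV. (1 - x$j) * C$j$i * \<theta>$j * v$j) = 0" for i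
      using M_apply[of C x \<theta> v i] unfolding M_def by (metis zero_index)
    have vi: "v$i = 0" if "i \<noteq> l" for i
    proof -
      have "(1 - \<theta>$i * x$i) * v$i = v$i - x$i * \<theta>$i * v$i" by (simp add: algebra_simps)
      also have "\<dots> = 0" using e[of i] s0[OF that, of v] by simp
      finally have "(1 - \<theta>$i * x$i) * v$i = 0" .
      thus ?thesis using pos[of i] by simp
    qed
    have "(\<Sum>j\<in>UNIV. (1 - x$j) * \<theta>$j * v$j) = 0"
      by (rule sum.neutral) (metis vi tl mult_zero_right mult_zero_left)
    hence "v$l = 0" using e[of l] sl[of v] tl by simp
    thus "v = 0" using vi by (metis vec_eq_iff zero_index)
  qed
  have My: "M *v y = (\<chi> i. 1 / N)"
  proof (subst vec_eq_iff, intro allI)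
    fix i
    show "(M *v y) $ i = (\<chi> i. 1 / N) $ i"
    proof (cases "i = l")
      case True
      have "(\<Sum>j\<in>UNIV. (1 - x$j) * \<theta>$j * y$j) = (\<Sum>j\<in>UNIV. (1 - x$j) * \<theta>$j / (N * (1 - \<theta>$j * x$j)))"
        by (rule sum.cong) (auto simp: y_def tl)
      thus ?thesis using True M_apply[of C x \<theta> y l] sl[of y] tl unfolding M_def by (simp add: y_def)
    next
      case False
      have "(M *v y) $ i = y$i - x$i * \<theta>$i * y$i"
        using M_apply[of C x \<theta> y i] s0[OF False, of y] unfolding M_def by simp
      also have "\<dots> = (1 - \<theta>$i * x$i) * y$i" by (simp add: algebra_simps)
      also have "\<dots> = 1 / N" using False pos[of i] N by (simp add: y_def)
      finally show ?thesis by simp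
    qed
  qed
  have "matrix_inv M *v (\<chi> i. 1 / N) = y" by (rule inv_solve[OF ker My])
  hence "Fmap C \<theta> x = (mat 1 - diag_mat \<theta>) *v y" unfolding Fmap_def M_def N_def by simp
  hence "Fmap C \<theta> x $ i = (1 - \<theta>$i) * y$i" by (simp add: diag_apply)
  thus ?thesis by (simp add: y_def N_def tl)
qed

lemma F_sum:
  fixes C :: "real^'n^'n"
  assumes rs: "row_stochastic_zero_diag C" and st: "star_topology C l"
    and th: "\<forall>i. 0 \<le> \<theta> $ i \<and> \<theta> $ i < 1" and tl: "\<theta> $ l = 0"
    and x1: "\<forall>i. i \<noteq> l \<longrightarrow> x$i \<le> 1"
  shows "(\<Sum>i\<in>UNIV. Fmap C \<theta> x $ i) = 1"
proof -
  define N where "N = real CARD('n)"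
  have N: "N > 0" unfolding N_def by simp
  have pos: "1 - \<theta>$j * x$j > 0" for j
  proof (cases "j = l")
    case True thus ?thesis using tl by simp
  next
    case False
    have "\<theta>$j * x$j \<le> \<theta>$j * 1" using th x1 False by (intro mult_left_mono) auto
    moreover have "\<theta>$j < 1" using th by blast
    ultimately show ?thesis by linarith
  qed
  define \<phi> where "\<phi> j = (1 - x$j) * \<theta>$j / (N * (1 - \<theta>$j * x$j))" for j
  define \<psi> where "\<psi> j = (1 - \<theta>$j) / (N * (1 - \<theta>$j * x$j))" for j
  have F: "Fmap C \<theta> x $ i = (if i = l then 1/N + sum \<phi> UNIV else \<psi> i)" for i
    using Fmap_formula[OF rs st th tl x1, of i] unfolding \<phi>_def \<psi>_def N_def by simp
  have a1: "(\<Sum>i\<in>UNIV. Fmap C \<theta> x $ i) = Fmap C \<theta> x $ l + (\<Sum>i\<in>UNIV-{l}. Fmap C \<theta> x $ i)"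
    by (simp add: sum.remove)
  have a2: "(\<Sum>i\<in>UNIV-{l}. Fmap C \<theta> x $ i) = sum \<psi> (UNIV-{l})"
    by (rule sum.cong) (auto simp: F)
  have a3: "sum \<phi> UNIV = \<phi> l + sum \<phi> (UNIV-{l})" by (simp add: sum.remove)
  have a4: "\<phi> l = 0" by (simp add: \<phi>_def tl)
  have "(\<Sum>i\<in>UNIV. Fmap C \<theta> x $ i) = 1/N + (sum \<phi> (UNIV-{l}) + sum \<psi> (UNIV-{l}))"
    using a1 a2 a3 a4 by (simp add: F)
  also have "sum \<phi> (UNIV-{l}) + sum \<psi> (UNIV-{l}) = (\<Sum>i\<in>UNIV-{l}. 1/N)"
    unfolding sum.distrib[symmetric]
  proof (rule sum.cong[OF refl])
    fix j
    have "\<phi> j + \<psi> j = ((1 - x$j) * \<theta>$j + (1 - \<theta>$j)) / (N * (1 - \<theta>$j * x$j))"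
      unfolding \<phi>_def \<psi>_def by (simp add: add_divide_distrib)
    also have "\<dots> = (1 - \<theta>$j * x$j) / (N * (1 - \<theta>$j * x$j))" by (simp add: algebra_simps)
    also have "\<dots> = 1/N" using pos[of j] by simp
    finally show "\<phi> j + \<psi> j = 1/N" .
  qed
  also have "\<dots> = (N - 1) / N" by (simp add: card_Diff_singleton N_def of_nat_diff)
  finally show ?thesis using N by (simp add: field_simps)
qed

lemma F_simplex:
  fixes C :: "real^'n^'n"
  assumes rs: "row_stochastic_zero_diag C" and st: "star_topology C l"
    and th: "\<forall>i. 0 \<le> \<theta> $ i \<and> \<theta> $ i < 1" and tl: "\<theta> $ l = 0"
    and x: "x \<in> prob_simplex"
  shows "Fmap C \<theta> x \<in> prob_simplex"
proof -
  have x0: "\<forall>i. 0 \<le> x$i" and xs: "(\<Sum>i\<in>UNIV. x$i) = 1" using x unfolding prob_simplex_def by auto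
  have x1a: "\<forall>i. x$i \<le> 1"
  proof
    fix i
    have "x$i \<le> (\<Sum>i\<in>UNIV. x$i)" by (rule member_le_sum) (use x0 in auto)
    thus "x$i \<le> 1" using xs by simp
  qed
  hence x1: "\<forall>i. i \<noteq> l \<longrightarrow> x$i \<le> 1" by blast
  have pos: "1 - \<theta>$j * x$j > 0" for j
  proof -
    have "\<theta>$j * x$j \<le> \<theta>$j * 1" using th x1a by (intro mult_left_mono) auto
    moreover have "\<theta>$j < 1" using th by blast
    ultimately show ?thesis by linarith
  qed
  have "0 \<le> Fmap C \<theta> x $ i" for i
  proof (cases "i = l")
    case True
    have "0 \<le> (\<Sum>j\<in>UNIV. (1 - x$j) * \<theta>$j / (real CARD('n) * (1 - \<theta>$j * x$j)))"
      by (rule sum_nonneg) (use x1a th pos in \<open>auto intro!: divide_nonneg_pos mult_nonneg_nonneg\<close>)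
    thus ?thesis using Fmap_formula[OF rs st th tl x1, of i] True by simp
  next
    case False
    have "\<theta>$i \<le> 1" using th by (simp add: less_imp_le)
    thus ?thesis using Fmap_formula[OF rs st th tl x1, of i] pos[of i] False
      by (auto intro!: divide_nonneg_pos)
  qed
  thus ?thesis using F_sum[OF rs st th tl x1] unfolding prob_simplex_def by auto
qed


lemma simplex_bounds: "v \<in> prob_simplex \<Longrightarrow> 0 \<le> v$i \<and> v$i \<le> 1"
proof -
  assume v: "v \<in> prob_simplex"
  have x0: "\<forall>i. 0 \<le> v$i" and xs: "(\<Sum>i\<in>UNIV. v$i) = 1" using v unfolding prob_simplex_def by auto
  have "v$i \<le> (\<Sum>i\<in>UNIV. v$i)" by (rule member_le_sum) (use x0 in auto)
  thus ?thesis using xs x0 by simp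
qed

lemma split_l: "(\<Sum>i\<in>UNIV. (v::real^'n)$i) = 1 \<Longrightarrow> v$l = 1 - (\<Sum>i\<in>UNIV-{l}. v$i)"
proof -
  assume h: "(\<Sum>i\<in>UNIV. v$i) = 1"
  have "(\<Sum>i\<in>UNIV. v$i) = v$l + (\<Sum>i\<in>UNIV-{l}. v$i)" by (rule sum.remove) auto
  with h show ?thesis by linarith
qed

theorem corollary4:
  fixes C :: "real^'n^'n" and \<theta> :: "real^'n" and l :: 'n
  assumes "CARD('n) \<ge> 2"
    and "row_stochastic_zero_diag C"
    and "\<forall>i. 0 \<le> \<theta> $ i \<and> \<theta> $ i < 1"
    and "\<exists>j. 0 < \<theta> $ j"
    and "star_topology C l"
    and "\<theta> $ l = 0"
  shows "xstar \<theta> l \<in> prob_simplex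
    \<and> Fmap C \<theta> (xstar \<theta> l) = xstar \<theta> l
    \<and> (\<forall>y\<in>prob_simplex. Fmap C \<theta> y = y \<longrightarrow> y = xstar \<theta> l)
    \<and> (\<forall>x0\<in>prob_simplex. \<exists>c \<rho>. 0 \<le> c \<and> 0 < \<rho> \<and> \<rho> < 1 \<and>
          (\<forall>s. norm (trajectory C \<theta> x0 s - xstar \<theta> l) \<le> c * \<rho> ^ s))"
proof -
  note rs = assms(2) and th = assms(3) and st = assms(5) and tl = assms(6)
  define N where "N = real CARD('n)"
  have N2: "N \<ge> 2" using assms(1) unfolding N_def by linarith
  define a where "a i = xstar_p \<theta> i" for i
  define X where "X = xstar \<theta> l"
  have ap: "0 \<le> a i \<and> a i \<le> 1 \<and> N*(\<theta>$i)*(a i)^2 - N*(a i) + (1-\<theta>$i) = 0" if "0 < \<theta>$i" for i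
    by (rule quad[OF N2 that]) (use th in \<open>auto simp: a_def xstar_p_def N_def Let_def\<close>)
  have thl1: "\<theta>$i < 1" for i using th by blast
  have th0: "0 \<le> \<theta>$i" for i using th by blast
  have c1: "(1-\<theta>$i)/(N*(1-\<theta>$i*a i)) = a i" if "0<\<theta>$i" for i
    using contr(1)[OF N2 that thl1[of i]] ap[OF that] by blast
  have c2: "0 < \<theta>$i * a i/(1-\<theta>$i)" if "0<\<theta>$i" for i
    using contr(2)[OF N2 that thl1[of i]] ap[OF that] by blast
  have c3: "\<theta>$i * a i/(1-\<theta>$i) < 1" if "0<\<theta>$i" for i
    using contr(3)[OF N2 that thl1[of i]] ap[OF that] by blast
  have c5: "\<bar>(1-\<theta>$i)/(N*(1-\<theta>$i*x)) - a i\<bar> \<le> \<theta>$i * a i/(1-\<theta>$i) * \<bar>x - a i\<bar>"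
    if "0<\<theta>$i" "0 \<le> x" "x \<le> 1" for i x
    using contr(5)[OF N2 that(1) thl1[of i] _ _ _ that(2,3)] ap[OF that(1)] by blast
  define S where "S = (\<Sum>j\<in>{j. 0 < \<theta> $ j}. \<theta> $ j * (1 - a j) / (1 - \<theta> $ j * a j))"
  have Xi: "X$i = (if 0 < \<theta>$i then a i else if i = l then 1/N + (1/N) * S else 1/N)" for i
    unfolding X_def xstar_def a_def S_def N_def by (simp add: Let_def)
  have X1: "\<forall>i. i \<noteq> l \<longrightarrow> X$i \<le> 1"
  proof (intro allI impI)
    fix i assume il: "i \<noteq> l"
    show "X$i \<le> 1" using ap[of i] N2 il by (auto simp: Xi)
  qed
  have FX: "Fmap C \<theta> X = X"
  proof (subst vec_eq_iff, intro allI)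
    fix i
    show "Fmap C \<theta> X $ i = X $ i"
    proof (cases "i = l")
      case True
      have "(\<Sum>j\<in>UNIV. (1 - X$j) * \<theta>$j / (N * (1 - \<theta>$j * X$j)))
          = (\<Sum>j\<in>{j. 0 < \<theta> $ j}. (1 - X$j) * \<theta>$j / (N * (1 - \<theta>$j * X$j)))"
        by (rule sum.mono_neutral_right) (use th0 in \<open>auto simp: order_le_less\<close>)
      also have "\<dots> = (1/N) * S" unfolding S_def sum_distrib_left
      proof (rule sum.cong[OF refl])
        fix j assume "j \<in> {j. 0 < \<theta> $ j}"
        hence "X$j = a j" by (simp add: Xi)
        moreover have "1/N * (\<theta>$j * (1 - a j) / (1 - \<theta>$j * a j)) = (\<theta>$j * (1 - a j)) / (N * (1 - \<theta>$j * a j))"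
          by simp
        ultimately show "(1 - X$j) * \<theta>$j / (N * (1 - \<theta>$j * X$j)) = 1/N * (\<theta>$j * (1 - a j) / (1 - \<theta>$j * a j))"
          by (simp add: mult.commute)
      qed
      finally show ?thesis using Fmap_formula[OF rs st th tl X1, of i] True tl
        by (simp add: Xi N_def)
    next
      case False
      show ?thesis
      proof (cases "0 < \<theta>$i")
        case True
        thus ?thesis using Fmap_formula[OF rs st th tl X1, of i] False c1[OF True]
          by (simp add: Xi N_def)
      next
        case F2: False
        hence "\<theta>$i = 0" using th0[of i] by linarith
        thus ?thesis using Fmap_formula[OF rs st th tl X1, of i] False F2
          by (simp add: Xi N_def)
      qed
    qed
  qed
  have Xs: "X \<in> prob_simplex"
  proof -
    have "0 \<le> S" unfolding S_def
    proof (rule sum_nonneg)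
      fix j assume "j \<in> {j. 0 < \<theta> $ j}"
      hence j: "0 < \<theta>$j" by simp
      have "\<theta>$j * a j \<le> \<theta>$j" using ap[OF j] j by (simp add: mult_left_le)
      hence "0 < 1 - \<theta>$j * a j" using thl1[of j] by linarith
      thus "0 \<le> \<theta> $ j * (1 - a j) / (1 - \<theta> $ j * a j)" using ap[OF j] j by simp
    qed
    hence "0 \<le> X$i" for i using ap[of i] N2 by (auto simp: Xi)
    moreover have "(\<Sum>i\<in>UNIV. X$i) = 1" using F_sum[OF rs st th tl X1] FX by simp
    ultimately show ?thesis unfolding prob_simplex_def by auto
  qed
  define L where "L i = (if 0 < \<theta>$i then \<theta>$i * a i / (1 - \<theta>$i) else 0)" for i
  define \<rho> where "\<rho> = Max (insert (1/2) (range L))"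
  have \<rho>ge: "L i \<le> \<rho>" for i unfolding \<rho>_def by (rule Max_ge) auto
  have \<rho>half: "1/2 \<le> \<rho>" unfolding \<rho>_def by (rule Max_ge) auto
  have \<rho>1: "\<rho> < 1" unfolding \<rho>_def
  proof (subst Max_less_iff, simp, simp, intro ballI)
    fix r assume "r \<in> insert (1/2) (range L)"
    then obtain i where "r = 1/2 \<or> r = L i" by auto
    thus "r < 1" using c3[of i] thl1[of i] by (auto simp: L_def)
  qed
  have L0: "0 \<le> L i" for i using c2[of i] thl1[of i] by (auto simp: L_def)
  have conv: "\<exists>c \<rho>. 0 \<le> c \<and> 0 < \<rho> \<and> \<rho> < 1 \<and>
          (\<forall>s. norm (trajectory C \<theta> x0 s - X) \<le> c * \<rho> ^ s)" if x0: "x0 \<in> prob_simplex" for x0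
  proof -
    define T where "T s = trajectory C \<theta> x0 s" for s
    have TS: "T (Suc s) = Fmap C \<theta> (T s)" for s unfolding T_def trajectory_def by simp
    have Tsim: "T s \<in> prob_simplex" for s
      by (induction s) (auto simp: TS F_simplex[OF rs st th tl] x0, simp add: T_def trajectory_def x0)
    have Tb: "0 \<le> T s $ i \<and> T s $ i \<le> 1" for s i using simplex_bounds[OF Tsim] .
    have T1: "\<forall>i. i \<noteq> l \<longrightarrow> T s $ i \<le> 1" for s using Tb by blast
    have comp: "\<bar>T s $ i - X $ i\<bar> \<le> \<rho> ^ s" if il: "i \<noteq> l" for i s
    proof (cases "0 < \<theta>$i")
      case True
      show ?thesis
      proof (induction s)
        case 0
        have "0 \<le> X$i \<and> X$i \<le> 1" using simplex_bounds[OF Xs] .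
        thus ?case using Tb[of 0 i] unfolding abs_le_iff power_0 by linarith
      next
        case (Suc s)
        have "\<bar>T (Suc s) $ i - X $ i\<bar> = \<bar>(1-\<theta>$i)/(N*(1-\<theta>$i*T s $ i)) - a i\<bar>"
          using Fmap_formula[OF rs st th tl T1, of s i] il True by (simp add: TS Xi N_def)
        also have "\<dots> \<le> \<theta>$i * a i/(1-\<theta>$i) * \<bar>T s $ i - a i\<bar>"
          by (rule c5[OF True]) (use Tb in auto)
        also have "\<dots> \<le> \<rho> * \<rho>^s"
          using Suc \<rho>ge[of i] L0[of i] True by (intro mult_mono) (auto simp: L_def Xi)
        finally show ?case by simp
      qed
    next
      case False
      hence t0: "\<theta>$i = 0" using th0[of i] by linarith
      show ?thesis
      proof (cases s)
        case 0
        have "0 \<le> X$i \<and> X$i \<le> 1" using simplex_bounds[OF Xs] .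
        thus ?thesis using Tb[of 0 i] unfolding 0 abs_le_iff power_0 by linarith
      next
        case (Suc s')
        have "T s = Fmap C \<theta> (T s')" using Suc TS by simp
        hence "T s $ i = (1-\<theta>$i)/(real CARD('n) * (1 - \<theta>$i * T s' $ i))"
          using Fmap_formula[OF rs st th tl T1, of s' i] il by simp
        hence "T s $ i = 1/N" using t0 by (simp add: N_def)
        moreover have "X$i = 1/N" using il False by (simp add: Xi)
        moreover have "0 \<le> \<rho>^s" using \<rho>half by simp
        ultimately show ?thesis by simp
      qed
    qed
    have bound: "norm (T s - X) \<le> (2*N) * \<rho>^s" for s
    proof -
      have sT: "(\<Sum>i\<in>UNIV. T s $ i) = 1" using Tsim[of s] unfolding prob_simplex_def by auto
      have sX: "(\<Sum>i\<in>UNIV. X $ i) = 1" using Xs unfolding prob_simplex_def by auto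
      have R: "(\<Sum>i\<in>UNIV-{l}. \<bar>T s $ i - X $ i\<bar>) \<le> N * \<rho>^s"
      proof -
        have "(\<Sum>i\<in>UNIV-{l}. \<bar>T s $ i - X $ i\<bar>) \<le> (\<Sum>i\<in>UNIV-{l}. \<rho>^s)"
          by (rule sum_mono) (use comp in auto)
        also have "\<dots> = real (card (UNIV - {l} :: 'n set)) * \<rho>^s" by simp
        also have "\<dots> \<le> N * \<rho>^s" unfolding N_def using \<rho>half
          by (intro mult_right_mono) (auto simp: card_Diff_singleton)
        finally show ?thesis .
      qed
      have e1: "T s $ l - X $ l = (\<Sum>i\<in>UNIV-{l}. X $ i) - (\<Sum>i\<in>UNIV-{l}. T s $ i)"
        using split_l[where l=l, OF sT] split_l[where l=l, OF sX] by linarith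
      have "\<bar>T s $ l - X $ l\<bar> = \<bar>(\<Sum>i\<in>UNIV-{l}. X $ i - T s $ i)\<bar>"
        unfolding e1 by (simp only: sum_subtractf)
      also have "\<dots> \<le> (\<Sum>i\<in>UNIV-{l}. \<bar>X $ i - T s $ i\<bar>)" by (rule sum_abs)
      also have "\<dots> = (\<Sum>i\<in>UNIV-{l}. \<bar>T s $ i - X $ i\<bar>)" by (intro sum.cong refl abs_minus_commute)
      finally have Ll: "\<bar>T s $ l - X $ l\<bar> \<le> N * \<rho>^s" using R by linarith
      have "norm (T s - X) \<le> (\<Sum>i\<in>UNIV. \<bar>(T s - X) $ i\<bar>)" by (rule norm_le_l1_cart)
      also have "\<dots> = \<bar>(T s - X) $ l\<bar> + (\<Sum>i\<in>UNIV-{l}. \<bar>(T s - X) $ i\<bar>)"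
        by (rule sum.remove) auto
      also have "\<dots> = \<bar>T s $ l - X $ l\<bar> + (\<Sum>i\<in>UNIV-{l}. \<bar>T s $ i - X $ i\<bar>)"
        by simp
      also have "\<dots> \<le> (2*N) * \<rho>^s" using Ll R by linarith
      finally show ?thesis .
    qed
    show ?thesis
      by (rule exI[of _ "2*N"], rule exI[of _ \<rho>]) (use bound \<rho>half \<rho>1 N2 in \<open>auto simp: T_def\<close>)
  qed
  have uniq: "y = X" if y: "y \<in> prob_simplex" "Fmap C \<theta> y = y" for y
  proof -
    have Ty: "trajectory C \<theta> y s = y" for s
      unfolding trajectory_def by (induction s) (auto simp: y(2))
    obtain c r where cr: "0 \<le> c" "0 < r" "r < 1" "\<forall>s. norm (y - X) \<le> c * r ^ s"
      using conv[OF y(1)] Ty by auto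
    have "(\<lambda>s. c * r^s) \<longlonglongrightarrow> c * 0"
      by (intro tendsto_mult tendsto_const LIMSEQ_power_zero) (use cr in auto)
    hence lim: "(\<lambda>s. c * r^s) \<longlonglongrightarrow> 0" by simp
    have "norm (y - X) \<le> 0"
      by (rule LIMSEQ_le_const[OF lim]) (use cr in auto)
    thus ?thesis by simp
  qed
  show ?thesis using Xs FX uniq conv unfolding X_def by blast
qed

end
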